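(* Let $k\ge1$ and let $\phi=(\phi_1,\dots,\phi_k):\mathbb{D}^k\to\overline{\mathbb{D}}^k$ be an analytic map such that $C_\phi f=f\circ\phi$ maps $A^+(\mathbb{T}^k)$ into itself. Then $C_\phi:A^+(\mathbb{T}^k)\to A^+(\mathbb{T}^k)$ is an isometry if and only if there exist a square matrix $A=(a_{ij})_{1\le i,j\le k}$ with $a_{ij}\in\mathbb{N}_0$ and $\det A\ne0$, and complex numbers $\epsilon_1,\dots,\epsilon_k$ of modulus $1$, such that $$\phi_i(z)=\epsilon_iz_1^{a_{i1}}\cdots z_k^{a_{ik}},\qquad1\le i\le k,\ z=(z_1,\dots,z_k)\in\mathbb{D}^k.$$
   Context: $A^+(\mathbb{T}^k)$ is the algebra of functions $f(z)=\sum_{\alpha\in\mathbb{N}_0^k}a_\alpha z^\alpha$ on $\overline{\mathbb{D}}^k$ with $\|f\|_{A^+(\mathbb{T}^k)}=\sum|a_\alpha|<\infty$, a Banach algebra under pointwise multiplication. $\mathbb{N}_0=\{0,1,2,\dots\}$. *)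

theory Defs
  imports "HOL-Analysis.Analysis"
begin

text \<open>Multi-indices are functions 'k \<Rightarrow> nat on a finite index type 'k (so k = CARD('k) \<ge> 1).\<close>

definition monom :: "complex^'k \<Rightarrow> ('k::finite \<Rightarrow> nat) \<Rightarrow> complex" where
  "monom z \<alpha> = (\<Prod>i\<in>UNIV. (z$i) ^ (\<alpha> i))"

definition polydisc :: "(complex^'k::finite) set" where
  "polydisc = {z. \<forall>i. norm (z$i) < 1}"

definition cpolydisc :: "(complex^'k::finite) set" where
  "cpolydisc = {z. \<forall>i. norm (z$i) \<le> 1}"

text \<open>Elements of A^+(T^k) are represented by their (absolutely summable) coefficient families.\<close>
definition Aplus :: "(('k::finite \<Rightarrow> nat) \<Rightarrow> complex) set" where
  "Aplus = {c. (\<lambda>\<alpha>. norm (c \<alpha>)) summable_on UNIV}"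

definition Aplus_eval :: "(('k::finite \<Rightarrow> nat) \<Rightarrow> complex) \<Rightarrow> complex^'k \<Rightarrow> complex" where
  "Aplus_eval c z = (\<Sum>\<^sub>\<infinity>\<alpha>. c \<alpha> * monom z \<alpha>)"

definition Aplus_norm :: "(('k::finite \<Rightarrow> nat) \<Rightarrow> complex) \<Rightarrow> real" where
  "Aplus_norm c = (\<Sum>\<^sub>\<infinity>\<alpha>. norm (c \<alpha>))"

text \<open>d represents C_phi f = f o phi, where c represents f: they agree on the open polydisc.\<close>
definition is_comp :: "(complex^'k \<Rightarrow> complex^'k) \<Rightarrow> (('k::finite \<Rightarrow> nat) \<Rightarrow> complex)
     \<Rightarrow> (('k \<Rightarrow> nat) \<Rightarrow> complex) \<Rightarrow> bool" where
  "is_comp \<phi> c d \<longleftrightarrow> (\<forall>z\<in>polydisc. Aplus_eval d z = Aplus_eval c (\<phi> z))"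

definition holo_several :: "(complex^'k::finite \<Rightarrow> complex) \<Rightarrow> (complex^'k) set \<Rightarrow> bool" where
  "holo_several f S \<longleftrightarrow> (\<forall>z\<in>S. \<exists>D. (f has_derivative D) (at z) \<and>
       (\<forall>(a::complex) v. D (a *s v) = a * D v))"

end

theory Submission
  imports Defs
begin


lemma monom_add: "monom z (\<lambda>j. \<alpha> j + \<beta> j) = monom z \<alpha> * monom z \<beta>"
  unfolding monom_def by (simp add: power_add prod.distrib)

lemma monom_zero[simp]: "monom z (\<lambda>_. 0) = 1"
  unfolding monom_def by simp

lemma norm_monom_le:
  assumes "z \<in> cpolydisc" shows "norm (monom z \<alpha>) \<le> 1"
proof -
  have "norm (monom z \<alpha>) = (\<Prod>i\<in>UNIV. norm (z$i) ^ \<alpha> i)"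
    unfolding monom_def by (simp add: prod_norm[symmetric] norm_power)
  also have "\<dots> \<le> 1"
    using assms unfolding cpolydisc_def
    by (intro prod_le_1) (auto simp: power_le_one)
  finally show ?thesis .
qed

lemma Aplus_summable_eval:
  assumes "c \<in> Aplus" "z \<in> cpolydisc"
  shows "(\<lambda>\<alpha>. norm (c \<alpha> * monom z \<alpha>)) summable_on UNIV"
proof (rule Infinite_Sum.abs_summable_on_comparison_test')
  show "(\<lambda>\<alpha>. norm (c \<alpha>)) summable_on UNIV" using assms(1) unfolding Aplus_def by simp
  fix \<alpha> show "norm (c \<alpha> * monom z \<alpha>) \<le> norm (c \<alpha>)"
    using norm_monom_le[OF assms(2), of \<alpha>]
    by (simp add: norm_mult mult_left_le)
qed

lemma Aplus_summable_eval':
  assumes "c \<in> Aplus" "z \<in> cpolydisc"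
  shows "(\<lambda>\<alpha>. c \<alpha> * monom z \<alpha>) summable_on UNIV"
  by (rule Infinite_Sum.abs_summable_summable[OF Aplus_summable_eval[OF assms]])

lemma polydisc_sub: "polydisc \<subseteq> cpolydisc"
  unfolding polydisc_def cpolydisc_def by (auto simp: less_imp_le)

lemma Aplus_add: "c \<in> Aplus \<Longrightarrow> d \<in> Aplus \<Longrightarrow> (\<lambda>\<alpha>. c \<alpha> + d \<alpha>) \<in> Aplus"
  unfolding Aplus_def
  by (auto intro!: Infinite_Sum.abs_summable_on_comparison_test'[where g="\<lambda>\<alpha>. norm (c \<alpha>) + norm (d \<alpha>)"]
      summable_on_add norm_triangle_ineq)

lemma Aplus_scale: "c \<in> Aplus \<Longrightarrow> (\<lambda>\<alpha>. a * c \<alpha>) \<in> Aplus"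
  unfolding Aplus_def
  by (auto simp: norm_mult intro!: summable_on_cmult_right)

lemma eval_add:
  assumes "c \<in> Aplus" "d \<in> Aplus" "z \<in> cpolydisc"
  shows "Aplus_eval (\<lambda>\<alpha>. c \<alpha> + d \<alpha>) z = Aplus_eval c z + Aplus_eval d z"
  unfolding Aplus_eval_def using Aplus_summable_eval'[OF assms(1,3)] Aplus_summable_eval'[OF assms(2,3)]
  by (simp add: distrib_right infsum_add)

lemma eval_scale:
  shows "Aplus_eval (\<lambda>\<alpha>. a * c \<alpha>) z = a * Aplus_eval c z"
  unfolding Aplus_eval_def
  by (simp add: mult.assoc infsum_cmult_right')

lemma norm_eval_le:
  assumes "c \<in> Aplus" "z \<in> cpolydisc"
  shows "norm (Aplus_eval c z) \<le> Aplus_norm c"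
  unfolding Aplus_eval_def Aplus_norm_def
proof (rule norm_infsum_le)
  show "((\<lambda>\<alpha>. c \<alpha> * monom z \<alpha>) has_sum infsum (\<lambda>\<alpha>. c \<alpha> * monom z \<alpha>) UNIV) UNIV"
    using Aplus_summable_eval'[OF assms] by (simp add: has_sum_infsum)
  show "((\<lambda>\<alpha>. norm (c \<alpha>)) has_sum infsum (\<lambda>\<alpha>. norm (c \<alpha>)) UNIV) UNIV"
    using assms(1) unfolding Aplus_def by (simp add: has_sum_infsum)
  fix \<alpha> show "norm (c \<alpha> * monom z \<alpha>) \<le> norm (c \<alpha>)"
    using norm_monom_le[OF assms(2), of \<alpha>]
    by (simp add: norm_mult mult_left_le)
qed



lemma digits_lt:
  fixes a :: "nat \<Rightarrow> nat"
  assumes "\<forall>i<n. a i < B"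
  shows "(\<Sum>i<n. a i * B^i) < B^n"
  using assms
proof (induction n)
  case 0 then show ?case by simp
next
  case (Suc n)
  have "(\<Sum>i<Suc n. a i * B^i) = (\<Sum>i<n. a i * B^i) + a n * B^n" by simp
  also have "\<dots> < B^n + a n * B^n" using Suc by simp
  also have "\<dots> = (Suc (a n)) * B^n" by simp
  also have "\<dots> \<le> B * B^n" using Suc.prems by (intro mult_right_mono) auto
  finally show ?case by simp
qed

lemma digits_inj:
  fixes a b :: "nat \<Rightarrow> nat"
  assumes "\<forall>i<n. a i < B" "\<forall>i<n. b i < B"
    and "(\<Sum>i<n. a i * B^i) = (\<Sum>i<n. b i * B^i)"
  shows "\<forall>i<n. a i = b i"
  using assms
proof (induction n)
  case 0 then show ?case by simp
next
  case (Suc n)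
  let ?SA = "\<Sum>i<n. a i * B^i" and ?SB = "\<Sum>i<n. b i * B^i"
  have la: "?SA < B^n" using Suc.prems digits_lt[of n a B] by auto
  have lb: "?SB < B^n" using Suc.prems digits_lt[of n b B] by auto
  have eq: "?SA + a n * B^n = ?SB + b n * B^n" using Suc.prems(3) by simp
  have Bpos: "B^n > 0" using la by (meson le0 le_less_trans)
  have "(?SA + a n * B^n) div B^n = a n" using la Bpos by simp
  moreover have "(?SB + b n * B^n) div B^n = b n" using lb Bpos by simp
  ultimately have an: "a n = b n" using eq by simp
  have "(?SA + a n * B^n) mod B^n = ?SA" using la by simp
  moreover have "(?SB + b n * B^n) mod B^n = ?SB" using lb by simp
  ultimately have "?SA = ?SB" using eq by simp
  then have "\<forall>i<n. a i = b i" by (intro Suc.IH) (use Suc.prems in auto)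
  then show ?case using an by (auto simp: less_Suc_eq)
qed

lemma powser_zero_unique:
  fixes C :: "nat \<Rightarrow> complex"
  assumes summ: "(\<lambda>m. norm (C m)) summable_on UNIV"
    and zero: "\<And>t::real. 0<t \<Longrightarrow> t<1 \<Longrightarrow> ((\<lambda>m. C m * of_real t ^ m) has_sum 0) UNIV"
  shows "C m = 0"
proof (induction m rule: less_induct)
  case (less m)
  define S where "S = infsum (\<lambda>m. norm (C m)) UNIV"
  have S: "((\<lambda>m. norm (C m)) has_sum S) UNIV" using summ S_def by (simp add: has_sum_infsum)
  have key: "norm (C m) \<le> S * t" if t: "0<t" "t<1" for t :: real
  proof -
    let ?f = "\<lambda>j. C j * of_real t ^ j"
    define g where "g j = (if m < j then ?f j else 0)" for j
    have fg: "?f j = g j + (if j = m then C m * of_real t ^ m else 0)" for j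
      using less.IH[of j] by (auto simp: g_def)
    have h1: "((\<lambda>j. if j = m then C m * of_real t ^ m else 0) has_sum (C m * of_real t ^ m)) UNIV"
      by (rule has_sum_finite_neutralI[where B="{m}"]) auto
    have "((\<lambda>j. ?f j + - (if j = m then C m * of_real t ^ m else 0)) has_sum (0 + - (C m * of_real t ^ m))) UNIV"
      by (rule has_sum_add[OF zero[OF t] has_sum_uminusI[OF h1]])
    moreover have "(\<lambda>j. ?f j + - (if j = m then C m * of_real t ^ m else 0)) = g"
    proof
      fix j
      have "g j = ?f j - (if j = m then C m * of_real t ^ m else 0)"
        by (subst fg[of j]) simp
      then show "?f j + - (if j = m then C m * of_real t ^ m else 0) = g j" by simp
    qed
    ultimately have hg: "(g has_sum (- (C m * of_real t ^ m))) UNIV" by simp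
    have hh: "((\<lambda>j. norm (C j) * t^(Suc m)) has_sum (S * t^(Suc m))) UNIV"
      using has_sum_cmult_left[OF S, of "t^Suc m"] by (simp add: mult.commute)
    have "norm (- (C m * of_real t ^ m)) \<le> S * t^(Suc m)"
    proof (rule norm_infsum_le[OF hg hh])
      fix j :: nat
      show "norm (g j) \<le> norm (C j) * t ^ Suc m"
      proof (cases "m < j")
        case True
        have "t ^ j \<le> t ^ Suc m" using True t by (intro power_decreasing) auto
        then show ?thesis using True t
          by (simp add: g_def norm_mult norm_power mult_left_mono)
      qed (use t in \<open>simp add: g_def\<close>)
    qed
    then have "norm (C m) * t^m \<le> (S * t) * t^m" using t by (simp add: norm_mult norm_power mult_ac)
    then show ?thesis using t by simp
  qed
  have S0: "S \<ge> 0" using S has_sum_nonneg by (metis norm_ge_zero)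
  show ?case
  proof (rule ccontr)
    assume ne: "C m \<noteq> 0"
    define t where "t = min (1/2) (norm (C m) / (2 * (S + 1)))"
    have t0: "0 < t" "t < 1" using ne S0 by (auto simp: t_def)
    have "S * t \<le> S * (norm (C m) / (2 * (S + 1)))" using S0 by (intro mult_left_mono) (auto simp: t_def)
    also have "\<dots> < norm (C m)" using ne S0 by (simp add: field_simps add_nonneg_pos)
    finally show False using key[OF t0] by simp
  qed
qed

lemma has_sum_group_fibers:
  fixes e :: "'a \<Rightarrow> nat" and h :: "'a \<Rightarrow> 'b::{comm_monoid_add,uniform_space,uniform_topological_group_add}"
  assumes fin: "\<And>m. finite {\<alpha>. e \<alpha> = m}" and hs: "(h has_sum s) UNIV"
  shows "((\<lambda>m. sum h {\<alpha>. e \<alpha> = m}) has_sum s) UNIV"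
proof (rule has_sum_Sigma'[where B="\<lambda>m. {\<alpha>. e \<alpha> = m}" and f="\<lambda>(m,\<alpha>). h \<alpha>"])
  have eq: "Sigma UNIV (\<lambda>m. {\<alpha>. e \<alpha> = m}) = (\<lambda>\<alpha>. (e \<alpha>, \<alpha>)) ` UNIV" by auto
  have inj: "inj_on (\<lambda>\<alpha>. (e \<alpha>, \<alpha>)) UNIV" by (auto simp: inj_on_def)
  show "((\<lambda>(m,\<alpha>). h \<alpha>) has_sum s) (Sigma UNIV (\<lambda>m. {\<alpha>. e \<alpha> = m}))"
    unfolding eq using has_sum_reindex[OF inj, of "\<lambda>(m,\<alpha>). h \<alpha>" s] hs by (simp add: o_def)
  fix m show "((\<lambda>\<alpha>. (\<lambda>(m,\<alpha>). h \<alpha>) (m, \<alpha>)) has_sum sum h {\<alpha>. e \<alpha> = m}) {\<alpha>. e \<alpha> = m}"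
    using fin by (simp add: has_sum_finiteI)
qed

lemma finite_bounded_multi: "finite {\<alpha>::'k::finite\<Rightarrow>nat. \<forall>j. \<alpha> j \<le> m}"
proof -
  have "{\<alpha>::'k\<Rightarrow>nat. \<forall>j. \<alpha> j \<le> m} = PiE UNIV (\<lambda>_. {..m})"
    by (auto simp: PiE_UNIV_domain Pi_def)
  then show ?thesis by (simp add: finite_PiE)
qed



lemma Aplus_unique0:
  fixes c :: "('k::finite \<Rightarrow> nat) \<Rightarrow> complex"
  assumes cA: "c \<in> Aplus" and z0: "\<forall>z\<in>polydisc. Aplus_eval c z = 0"
  shows "c \<alpha>0 = 0"
proof -
  obtain idx :: "'k \<Rightarrow> nat" where idx: "bij_betw idx UNIV {0..<card (UNIV::'k set)}"
    using ex_bij_betw_finite_nat[of "UNIV::'k set"] by auto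
  let ?K = "card (UNIV::'k set)"
  define w where "w N j = Suc N ^ idx j" for N j
  define e where "e N \<alpha> = (\<Sum>j\<in>UNIV. \<alpha> j * w N j)" for N and \<alpha> :: "'k \<Rightarrow> nat"
  have w1: "w N j \<ge> 1" for N j by (simp add: w_def)
  have w0: "w N j > 0" for N j by (simp add: w_def)
  have coord_le: "\<alpha> j \<le> e N \<alpha>" for N \<alpha> j
  proof -
    have "\<alpha> j \<le> \<alpha> j * w N j" using w1[of N j] by simp
    also have "\<dots> \<le> e N \<alpha>" unfolding e_def by (rule member_le_sum) auto
    finally show ?thesis .
  qed
  have fin: "finite {\<alpha>. e N \<alpha> = m}" for N m
    by (rule finite_subset[OF _ finite_bounded_multi[of m]]) (use coord_le in auto)
  have fib0: "sum c {\<alpha>. e N \<alpha> = m} = 0" for N m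
  proof -
    define C where "C m = sum c {\<alpha>. e N \<alpha> = m}" for m
    have nsum: "((\<lambda>\<alpha>. norm (c \<alpha>)) has_sum Aplus_norm c) UNIV"
      using cA unfolding Aplus_def Aplus_norm_def by (simp add: has_sum_infsum)
    have Dsum: "((\<lambda>m. sum (\<lambda>\<alpha>. norm (c \<alpha>)) {\<alpha>. e N \<alpha> = m}) has_sum Aplus_norm c) UNIV"
      by (rule has_sum_group_fibers[OF fin nsum])
    have summ: "(\<lambda>m. norm (C m)) summable_on UNIV"
    proof (rule summable_on_comparison_test)
      show "(\<lambda>m. sum (\<lambda>\<alpha>. norm (c \<alpha>)) {\<alpha>. e N \<alpha> = m}) summable_on UNIV"
        using Dsum by (rule has_sum_imp_summable)
      fix m show "norm (C m) \<le> sum (\<lambda>\<alpha>. norm (c \<alpha>)) {\<alpha>. e N \<alpha> = m}"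
        unfolding C_def by (rule norm_sum)
    qed auto
    have zero: "((\<lambda>m. C m * of_real t ^ m) has_sum 0) UNIV" if t: "0<t" "t<1" for t :: real
    proof -
      define z :: "complex^'k" where "z = (\<chi> j. of_real (t ^ w N j))"
      have zP: "z \<in> polydisc"
        unfolding polydisc_def z_def using t w0
        by (auto simp: norm_power intro!: power_less_one_iff[THEN iffD2])
      have mon: "monom z \<alpha> = of_real t ^ e N \<alpha>" for \<alpha>
        unfolding monom_def z_def e_def
        by (simp add: power_sum power_mult[symmetric] mult.commute)
      have "((\<lambda>\<alpha>. c \<alpha> * monom z \<alpha>) has_sum Aplus_eval c z) UNIV"
        unfolding Aplus_eval_def using Aplus_summable_eval'[OF cA] zP polydisc_sub
        by (auto simp: has_sum_infsum)
      then have "((\<lambda>\<alpha>. c \<alpha> * of_real t ^ e N \<alpha>) has_sum 0) UNIV"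
        using z0 zP by (simp add: mon)
      from has_sum_group_fibers[OF fin this]
      have "((\<lambda>m. sum (\<lambda>\<alpha>. c \<alpha> * of_real t ^ e N \<alpha>) {\<alpha>. e N \<alpha> = m}) has_sum 0) UNIV" .
      moreover have "sum (\<lambda>\<alpha>. c \<alpha> * of_real t ^ e N \<alpha>) {\<alpha>. e N \<alpha> = m} = C m * of_real t ^ m" for m
        unfolding C_def sum_distrib_right by (rule sum.cong) auto
      ultimately show ?thesis by simp
    qed
    show ?thesis using powser_zero_unique[OF summ zero] unfolding C_def by blast
  qed
  have dig: "\<alpha> = \<beta>" if "\<forall>j. \<alpha> j \<le> N" "\<forall>j. \<beta> j \<le> N" "e N \<alpha> = e N \<beta>" for N \<alpha> \<beta>
  proof -
    define iv where "iv = the_inv_into UNIV idx"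
    have ivid: "iv (idx j) = j" for j
      unfolding iv_def using idx by (simp add: bij_betw_def the_inv_into_f_f)
    have reidx: "e N \<gamma> = (\<Sum>i<?K. \<gamma> (iv i) * Suc N ^ i)" for \<gamma> :: "'k \<Rightarrow> nat"
    proof -
      have "(\<Sum>i<?K. \<gamma> (iv i) * Suc N ^ i) = (\<Sum>i\<in>{0..<?K}. \<gamma> (iv i) * Suc N ^ i)"
        by (simp add: atLeast0LessThan)
      also have "\<dots> = (\<Sum>j\<in>UNIV. \<gamma> (iv (idx j)) * Suc N ^ idx j)"
        by (rule sum.reindex_bij_betw[OF idx, symmetric])
      also have "\<dots> = e N \<gamma>" by (simp add: ivid e_def w_def)
      finally show ?thesis by simp
    qed
    have "\<forall>i<?K. \<alpha> (iv i) = \<beta> (iv i)"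
      by (rule digits_inj[where B="Suc N"]) (use that reidx in \<open>auto simp: le_imp_less_Suc\<close>)
    moreover have "idx j < ?K" for j using idx by (auto simp: bij_betw_def)
    ultimately show ?thesis by (metis ivid ext)
  qed
  have small: "norm (c \<alpha>0) \<le> \<epsilon>" if eps: "\<epsilon> > 0" for \<epsilon>
  proof -
    define S where "S = Aplus_norm c"
    have nsum: "((\<lambda>\<alpha>. norm (c \<alpha>)) has_sum S) UNIV"
      using cA unfolding Aplus_def Aplus_norm_def S_def by (simp add: has_sum_infsum)
    obtain F where F: "finite F" "dist (sum (\<lambda>\<alpha>. norm (c \<alpha>)) F) S \<le> \<epsilon>"
      using has_sum_finite_approximation[OF nsum eps] by auto
    define N where "N = (\<Sum>\<alpha>\<in>insert \<alpha>0 F. \<Sum>j\<in>UNIV. \<alpha> j)"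
    have Nb: "\<alpha> j \<le> N" if "\<alpha> \<in> insert \<alpha>0 F" for \<alpha> j
    proof -
      have "\<alpha> j \<le> (\<Sum>j\<in>UNIV. \<alpha> j)" by (rule member_le_sum) auto
      also have "\<dots> \<le> N" unfolding N_def using F(1) that
        by (intro member_le_sum) auto
      finally show ?thesis .
    qed
    define Fb where "Fb = {\<alpha>. e N \<alpha> = e N \<alpha>0}"
    have finFb: "finite Fb" unfolding Fb_def by (rule fin)
    have a0: "\<alpha>0 \<in> Fb" by (simp add: Fb_def)
    have "sum c Fb = 0" unfolding Fb_def by (rule fib0)
    then have ca0: "c \<alpha>0 = - sum c (Fb - {\<alpha>0})"
      using sum.remove[OF finFb a0, of c] by (simp add: add_eq_0_iff)
    have disj: "(Fb - {\<alpha>0}) \<inter> F = {}"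
    proof (rule ccontr)
      assume "(Fb - {\<alpha>0}) \<inter> F \<noteq> {}"
      then obtain \<alpha> where "\<alpha> \<in> Fb" "\<alpha> \<noteq> \<alpha>0" "\<alpha> \<in> F" by auto
      then have "\<alpha> = \<alpha>0" using dig[of \<alpha> N \<alpha>0] Nb by (auto simp: Fb_def)
      with \<open>\<alpha> \<noteq> \<alpha>0\<close> show False by simp
    qed
    have "norm (c \<alpha>0) \<le> sum (\<lambda>\<alpha>. norm (c \<alpha>)) (Fb - {\<alpha>0})"
      unfolding ca0 norm_minus_cancel by (rule norm_sum)
    also have "\<dots> = sum (\<lambda>\<alpha>. norm (c \<alpha>)) ((Fb - {\<alpha>0}) \<union> F) - sum (\<lambda>\<alpha>. norm (c \<alpha>)) F"
      using sum.union_disjoint[OF _ F(1) disj, of "\<lambda>\<alpha>. norm (c \<alpha>)"] finFb by simp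
    also have "\<dots> \<le> S - sum (\<lambda>\<alpha>. norm (c \<alpha>)) F"
      using finite_sum_le_has_sum[OF nsum, of "(Fb - {\<alpha>0}) \<union> F"] finFb F(1) by auto
    also have "\<dots> \<le> \<epsilon>" using F(2) by (simp add: dist_real_def)
    finally show ?thesis .
  qed
  show ?thesis
  proof (rule ccontr)
    assume "c \<alpha>0 \<noteq> 0"
    then have "norm (c \<alpha>0) / 2 > 0" by simp
    from small[OF this] \<open>c \<alpha>0 \<noteq> 0\<close> show False by simp
  qed
qed

lemma Aplus_unique:
  fixes c d :: "('k::finite \<Rightarrow> nat) \<Rightarrow> complex"
  assumes "c \<in> Aplus" "d \<in> Aplus" "\<forall>z\<in>polydisc. Aplus_eval c z = Aplus_eval d z"
  shows "c = d"
proof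
  fix \<alpha>
  have m: "(\<lambda>\<alpha>. c \<alpha> + (-1) * d \<alpha>) \<in> Aplus" by (intro Aplus_add Aplus_scale assms)
  have "\<forall>z\<in>polydisc. Aplus_eval (\<lambda>\<alpha>. c \<alpha> + (-1) * d \<alpha>) z = 0"
  proof
    fix z :: "complex^'k" assume z: "z \<in> polydisc"
    have "Aplus_eval (\<lambda>\<alpha>. c \<alpha> + (-1) * d \<alpha>) z = Aplus_eval c z + Aplus_eval (\<lambda>\<alpha>. (-1) * d \<alpha>) z"
      by (rule eval_add) (use assms Aplus_scale[OF assms(2), of "-1"] z polydisc_sub in auto)
    also have "\<dots> = Aplus_eval c z + (-1) * Aplus_eval d z" by (subst eval_scale) (rule refl)
    finally show "Aplus_eval (\<lambda>\<alpha>. c \<alpha> + (-1) * d \<alpha>) z = 0" using assms(3) z by simp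
  qed
  from Aplus_unique0[OF m this, of \<alpha>] show "c \<alpha> = d \<alpha>" by simp
qed



lemma has_sum_group_fibers':
  fixes e :: "'a \<Rightarrow> 'c" and h :: "'a \<Rightarrow> 'b::{comm_monoid_add,uniform_space,uniform_topological_group_add}"
  assumes fin: "\<And>m. finite {\<alpha>. e \<alpha> = m}" and hs: "(h has_sum s) UNIV"
  shows "((\<lambda>m. sum h {\<alpha>. e \<alpha> = m}) has_sum s) UNIV"
proof (rule has_sum_Sigma'[where B="\<lambda>m. {\<alpha>. e \<alpha> = m}" and f="\<lambda>(m,\<alpha>). h \<alpha>"])
  have eq: "Sigma UNIV (\<lambda>m. {\<alpha>. e \<alpha> = m}) = (\<lambda>\<alpha>. (e \<alpha>, \<alpha>)) ` UNIV" by auto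
  have inj: "inj_on (\<lambda>\<alpha>. (e \<alpha>, \<alpha>)) UNIV" by (auto simp: inj_on_def)
  show "((\<lambda>(m,\<alpha>). h \<alpha>) has_sum s) (Sigma UNIV (\<lambda>m. {\<alpha>. e \<alpha> = m}))"
    unfolding eq using has_sum_reindex[OF inj, of "\<lambda>(m,\<alpha>). h \<alpha>" s] hs by (simp add: o_def)
  fix m show "((\<lambda>\<alpha>. (\<lambda>(m,\<alpha>). h \<alpha>) (m, \<alpha>)) has_sum sum h {\<alpha>. e \<alpha> = m}) {\<alpha>. e \<alpha> = m}"
    using fin by (simp add: has_sum_finiteI)
qed

lemma product_has_sum:
  fixes f g :: "'a \<Rightarrow> 'b::{banach, real_normed_field}"
  assumes f: "(\<lambda>x. norm (f x)) summable_on UNIV" and g: "(\<lambda>y. norm (g y)) summable_on UNIV"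
  shows "(\<lambda>(x,y). norm (f x * g y)) summable_on UNIV"
    and "((\<lambda>(x,y). f x * g y) has_sum (infsum f UNIV * infsum g UNIV)) UNIV"
proof -
  have Sg: "Sigma (UNIV::'a set) (\<lambda>_. UNIV::'a set) = UNIV" by auto
  have "(\<lambda>p. norm (f (fst p) * g (snd p))) summable_on Sigma UNIV (\<lambda>_. UNIV)"
  proof (subst Infinite_Sum.abs_summable_on_Sigma_iff, intro conjI ballI)
    fix x show "(\<lambda>y. norm (f (fst (x, y)) * g (snd (x, y)))) summable_on UNIV"
      using summable_on_cmult_right[OF g, of "norm (f x)"] by (simp add: norm_mult)
  next
    have "(\<lambda>x. norm (infsum (\<lambda>y. norm (f (fst (x, y)) * g (snd (x, y)))) UNIV)) = (\<lambda>x. norm (f x) * infsum (\<lambda>y. norm (g y)) UNIV)"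
      by (simp add: norm_mult infsum_cmult_right' abs_mult infsum_nonneg)
    then show "(\<lambda>x. norm (\<Sum>\<^sub>\<infinity>y\<in>UNIV. norm (f (fst (x, y)) * g (snd (x, y))))) summable_on UNIV"
      using summable_on_cmult_left[OF f, of "infsum (\<lambda>y. norm (g y)) UNIV"] by simp
  qed
  then have abs: "(\<lambda>p. norm (f (fst p) * g (snd p))) summable_on UNIV" unfolding Sg .
  then show "(\<lambda>(x,y). norm (f x * g y)) summable_on UNIV" by (simp add: case_prod_unfold)
  have summ: "(\<lambda>(x,y). f x * g y) summable_on UNIV"
    using Infinite_Sum.abs_summable_summable[OF abs] by (simp add: case_prod_unfold)
  have fs: "f summable_on UNIV" using Infinite_Sum.abs_summable_summable[OF f] .
  have "infsum (\<lambda>(x,y). f x * g y) UNIV = infsum (\<lambda>x. infsum (\<lambda>y. f x * g y) UNIV) UNIV"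
    using infsum_Sigma'_banach[of "\<lambda>x y. f x * g y" UNIV "\<lambda>_. UNIV"] summ by (simp add: Sg)
  also have "\<dots> = infsum (\<lambda>x. f x * infsum g UNIV) UNIV" by (simp add: infsum_cmult_right')
  also have "\<dots> = infsum f UNIV * infsum g UNIV" by (simp add: infsum_cmult_left')
  finally show "((\<lambda>(x,y). f x * g y) has_sum (infsum f UNIV * infsum g UNIV)) UNIV"
    using summ by (metis has_sum_infsum)
qed

definition madd :: "('k \<Rightarrow> nat) \<Rightarrow> ('k \<Rightarrow> nat) \<Rightarrow> ('k \<Rightarrow> nat)" where
  "madd \<alpha> \<beta> = (\<lambda>j. \<alpha> j + \<beta> j)"

definition conv :: "(('k::finite \<Rightarrow> nat) \<Rightarrow> complex) \<Rightarrow> (('k \<Rightarrow> nat) \<Rightarrow> complex) \<Rightarrow> ('k \<Rightarrow> nat) \<Rightarrow> complex" where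
  "conv b b' \<gamma> = (\<Sum>p\<in>{p. madd (fst p) (snd p) = \<gamma>}. b (fst p) * b' (snd p))"

lemma finite_madd_fiber: "finite {p::('k::finite\<Rightarrow>nat)\<times>('k\<Rightarrow>nat). madd (fst p) (snd p) = \<gamma>}"
proof (rule finite_subset)
  show "{p. madd (fst p) (snd p) = \<gamma>} \<subseteq> {\<alpha>. \<forall>j. \<alpha> j \<le> \<gamma> j} \<times> {\<alpha>. \<forall>j. \<alpha> j \<le> \<gamma> j}"
    by (auto simp: madd_def)
  have "finite {\<alpha>::'k\<Rightarrow>nat. \<forall>j. \<alpha> j \<le> \<gamma> j}"
    by (rule finite_subset[OF _ finite_bounded_multi[of "sum \<gamma> UNIV"]])
       (auto intro: order.trans[OF _ member_le_sum])
  then show "finite ({\<alpha>::'k\<Rightarrow>nat. \<forall>j. \<alpha> j \<le> \<gamma> j} \<times> {\<alpha>. \<forall>j. \<alpha> j \<le> \<gamma> j})" by simp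
qed

lemma monom_madd: "monom z (madd \<alpha> \<beta>) = monom z \<alpha> * monom z \<beta>"
  unfolding madd_def by (rule monom_add)

lemma conv_props:
  fixes b b' :: "('k::finite \<Rightarrow> nat) \<Rightarrow> complex"
  assumes b: "b \<in> Aplus" and b': "b' \<in> Aplus"
  shows conv_Aplus: "conv b b' \<in> Aplus"
    and conv_eval: "\<And>z. z \<in> cpolydisc \<Longrightarrow> Aplus_eval (conv b b') z = Aplus_eval b z * Aplus_eval b' z"
    and conv_norm_le: "Aplus_norm (conv b b') \<le> Aplus_norm b * Aplus_norm b'"
    and conv_nocancel: "Aplus_norm (conv b b') = Aplus_norm b * Aplus_norm b' \<Longrightarrow>
            b \<alpha> \<noteq> 0 \<Longrightarrow> b' \<beta> \<noteq> 0 \<Longrightarrow> conv b b' (madd \<alpha> \<beta>) \<noteq> 0"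
proof -
  let ?F = "\<lambda>p. b (fst p) * b' (snd p)"
  let ?e = "\<lambda>p. madd (fst p) (snd p)"
  have bn: "(\<lambda>x. norm (b x)) summable_on UNIV" using b by (simp add: Aplus_def)
  have bn': "(\<lambda>x. norm (b' x)) summable_on UNIV" using b' by (simp add: Aplus_def)
  have bnn: "(\<lambda>x. norm (norm (b x))) summable_on UNIV" using bn by simp
  have bnn': "(\<lambda>x. norm (norm (b' x))) summable_on UNIV" using bn' by simp
  have Dh: "((\<lambda>p. norm (?F p)) has_sum (Aplus_norm b * Aplus_norm b')) UNIV"
    using product_has_sum(2)[OF bnn bnn'] unfolding Aplus_norm_def
    by (simp add: case_prod_unfold norm_mult)
  define D where "D \<gamma> = (\<Sum>p\<in>{p. ?e p = \<gamma>}. norm (?F p))" for \<gamma>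
  have Dsum: "(D has_sum (Aplus_norm b * Aplus_norm b')) UNIV"
    unfolding D_def by (rule has_sum_group_fibers'[OF finite_madd_fiber Dh])
  have cD: "norm (conv b b' \<gamma>) \<le> D \<gamma>" for \<gamma>
    unfolding conv_def D_def by (rule norm_sum)
  have cs: "(\<lambda>\<gamma>. norm (conv b b' \<gamma>)) summable_on UNIV"
    by (rule summable_on_comparison_test[OF has_sum_imp_summable[OF Dsum]]) (use cD in auto)
  then show cA: "conv b b' \<in> Aplus" by (simp add: Aplus_def)
  show "Aplus_norm (conv b b') \<le> Aplus_norm b * Aplus_norm b'"
    unfolding Aplus_norm_def[of "conv b b'"]
    using infsum_mono[OF cs has_sum_imp_summable[OF Dsum] cD] Dsum by (simp add: infsumI)
  show "Aplus_eval (conv b b') z = Aplus_eval b z * Aplus_eval b' z" if z: "z \<in> cpolydisc" for z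
  proof -
    let ?f = "\<lambda>x. b x * monom z x" and ?g = "\<lambda>y. b' y * monom z y"
    have f: "(\<lambda>x. norm (?f x)) summable_on UNIV" using Aplus_summable_eval[OF b z] .
    have g: "(\<lambda>x. norm (?g x)) summable_on UNIV" using Aplus_summable_eval[OF b' z] .
    have H: "((\<lambda>p. ?F p * monom z (?e p)) has_sum (Aplus_eval b z * Aplus_eval b' z)) UNIV"
      using product_has_sum(2)[OF f g] unfolding Aplus_eval_def
      by (simp add: case_prod_unfold monom_madd mult_ac)
    have "((\<lambda>\<gamma>. sum (\<lambda>p. ?F p * monom z (?e p)) {p. ?e p = \<gamma>}) has_sum (Aplus_eval b z * Aplus_eval b' z)) UNIV"
      by (rule has_sum_group_fibers'[OF finite_madd_fiber H])
    moreover have "sum (\<lambda>p. ?F p * monom z (?e p)) {p. ?e p = \<gamma>} = conv b b' \<gamma> * monom z \<gamma>" for \<gamma>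
      unfolding conv_def sum_distrib_right by (rule sum.cong) auto
    ultimately show ?thesis unfolding Aplus_eval_def by (simp add: infsumI)
  qed
  assume eq: "Aplus_norm (conv b b') = Aplus_norm b * Aplus_norm b'"
     and ba: "b \<alpha> \<noteq> 0" and bb: "b' \<beta> \<noteq> 0"
  have ds: "((\<lambda>\<gamma>. D \<gamma> - norm (conv b b' \<gamma>)) has_sum 0) UNIV"
  proof -
    have "((\<lambda>\<gamma>. norm (conv b b' \<gamma>)) has_sum Aplus_norm (conv b b')) UNIV"
      using cs by (simp add: Aplus_norm_def has_sum_infsum)
    from has_sum_add[OF Dsum has_sum_uminusI[OF this]] show ?thesis using eq by simp
  qed
  let ?\<gamma> = "madd \<alpha> \<beta>"
  have "D ?\<gamma> - norm (conv b b' ?\<gamma>) = 0"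
    by (rule nonneg_infsum_le_0D[where f="\<lambda>\<gamma>. D \<gamma> - norm (conv b b' \<gamma>)" and A=UNIV]) (use ds cD has_sum_imp_summable[OF ds] in \<open>auto simp: infsumI\<close>)
  moreover have "D ?\<gamma> > 0"
  proof -
    have "norm (?F (\<alpha>,\<beta>)) \<le> D ?\<gamma>" unfolding D_def
      by (rule member_le_sum) (auto simp: finite_madd_fiber)
    moreover have "norm (?F (\<alpha>,\<beta>)) > 0" using ba bb by simp
    ultimately show ?thesis by linarith
  qed
  ultimately show "conv b b' ?\<gamma> \<noteq> 0" by auto
qed



definition imat :: "int^'n^'m \<Rightarrow> 'a::comm_ring_1^'n^'m" where
  "imat A = (\<chi> i j. of_int (A$i$j))"

definition ivec :: "int^'n \<Rightarrow> 'a::comm_ring_1^'n" where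
  "ivec v = (\<chi> i. of_int (v$i))"

lemma det_imat: "det (imat A :: 'a::comm_ring_1^'n::finite^'n) = of_int (det A)"
  unfolding det_def imat_def by (simp add: of_int_sum of_int_prod)

lemma ivec_inj: "(ivec v :: 'a::{comm_ring_1,ring_char_0}^'n) = ivec w \<longleftrightarrow> v = w"
  by (auto simp: ivec_def vec_eq_iff)

lemma kernel_field:
  fixes A :: "'a::field^'n::finite^'n"
  assumes "det A = 0"
  shows "\<exists>x. x \<noteq> 0 \<and> transpose A *v x = 0"
proof -
  have "det (transpose A) = 0" using assms by simp
  then have "\<not> invertible (transpose A)" by (simp add: invertible_det_nz)
  then have nb: "\<not> bij ((*v) (transpose A))" by (simp add: invertible_eq_bij)
  have lin: "Vector_Spaces.linear (*s) (*s) ((*v) (transpose A))"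
    by (rule matrix_vector_mul_linear_gen)
  have "\<not> inj ((*v) (transpose A))"
    using nb vec.linear_inj_imp_surj[OF lin] by (auto simp: bij_def)
  then obtain x y where "x \<noteq> y" "transpose A *v x = transpose A *v y"
    unfolding inj_def by auto
  then have "x - y \<noteq> 0" "transpose A *v (x - y) = 0"
    by (auto simp: matrix_vector_mult_diff_distrib)
  then show ?thesis by blast
qed

lemma kernel_int:
  fixes A :: "int^'n::finite^'n"
  assumes "det A = 0"
  shows "\<exists>v. v \<noteq> 0 \<and> transpose A *v v = 0"
proof -
  have "det (imat A :: rat^'n^'n) = 0" using assms by (simp add: det_imat)
  then obtain x :: "rat^'n" where x: "x \<noteq> 0" "transpose (imat A) *v x = 0"
    using kernel_field by blast
  define p where "p i = fst (quotient_of (x$i))" for i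
  define q where "q i = snd (quotient_of (x$i))" for i
  have qpos: "q i > 0" for i unfolding q_def by (rule quotient_of_denom_pos') 
  have xpq: "x$i = of_int (p i) / of_int (q i)" for i
    by (rule quotient_of_div) (simp add: p_def q_def)
  define d where "d = (\<Prod>i\<in>UNIV. q i)"
  define v :: "int^'n" where "v = (\<chi> i. p i * (\<Prod>j\<in>UNIV-{i}. q j))"
  have "d > 0" unfolding d_def using qpos by (simp add: prod_pos)
  then have d0: "d \<noteq> 0" by simp
  have vx: "of_int (v$i) = of_int d * x$i" for i
  proof -
    have "d = q i * (\<Prod>j\<in>UNIV-{i}. q j)" unfolding d_def
      by (simp add: prod.remove)
    then show ?thesis using qpos[of i] by (simp add: v_def xpq field_simps)
  qed
  have "v \<noteq> 0"
  proof
    assume "v = 0"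
    then have "of_int d * x$i = 0" for i using vx[of i] by simp
    then have "x = 0" using d0 by (simp add: vec_eq_iff)
    with x show False by simp
  qed
  moreover have "transpose A *v v = 0"
  proof -
    have "of_int ((transpose A *v v)$j) = of_int d * (transpose (imat A) *v x)$j" for j :: 'n
      by (simp add: matrix_vector_mult_def transpose_def imat_def vx sum_distrib_left mult_ac)
    then have "of_int ((transpose A *v v)$j) = (0::rat)" for j using x(2) by simp
    then show ?thesis by (simp add: vec_eq_iff)
  qed
  ultimately show ?thesis by blast
qed

lemma cramer_field:
  fixes M :: "'a::field^'n::finite^'n"
  assumes "det M \<noteq> 0"
  shows "det M *s g = (\<Sum>i\<in>UNIV. det (\<chi> r. if r = i then g else M$r) *s M$i)"
proof -
  have "invertible (transpose M)" using assms by (simp add: invertible_det_nz)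
  then have "surj ((*v) (transpose M))" by (simp add: invertible_eq_bij bij_def)
  then obtain x where x: "transpose M *v x = g" by (metis surjD)
  have gx: "g = (\<Sum>i\<in>UNIV. x$i *s row i M)"
    unfolding x[symmetric] by (simp add: vec_eq_iff matrix_vector_mult_def transpose_def row_def sum_component mult.commute)
  have rowM: "row i M = M$i" for i by (simp add: row_def vec_eq_iff)
  have "det (\<chi> r. if r = k then g else M$r) = x$k * det M" for k
  proof -
    have "(\<chi> r. if r = k then g else M$r) = (\<chi> r. if r = k then (\<Sum>i\<in>UNIV. x$i *s row i M) else row r M)"
      using gx rowM by (simp add: vec_eq_iff)
    then show ?thesis using cramer_lemma_transpose[of k x M] by simp
  qed
  then have "(\<Sum>i\<in>UNIV. det (\<chi> r. if r = i then g else M$r) *s M$i) = det M *s (\<Sum>i\<in>UNIV. x$i *s M$i)"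
    by (simp add: vec.scale_sum_right vector_smult_assoc mult.commute rowM)
  then show ?thesis using gx rowM by simp
qed

lemma ivec_smult: "(ivec (c *s v) :: 'a::comm_ring_1^'n) = of_int c *s ivec v"
  by (simp add: ivec_def vec_eq_iff)

lemma ivec_sum: "(ivec (sum f S) :: 'a::comm_ring_1^'n) = sum (\<lambda>i. ivec (f i)) S"
  by (simp add: ivec_def vec_eq_iff sum_component of_int_sum)

lemma ivec_row: "(ivec (M$i) :: 'a::comm_ring_1^'n) = imat M $ i"
  by (simp add: ivec_def imat_def vec_eq_iff)

lemma cramer_int:
  fixes M :: "int^'n::finite^'n"
  assumes "det M \<noteq> 0"
  shows "det M *s g = (\<Sum>i\<in>UNIV. det (\<chi> r. if r = i then g else M$r) *s M$i)"
proof -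
  let ?M = "imat M :: rat^'n^'n"
  have d: "det ?M \<noteq> 0" using assms by (simp add: det_imat)
  have rep: "(\<chi> r. if r = i then ivec g else ?M$r) = imat (\<chi> r. if r = i then g else M$r)" for i
    by (simp add: vec_eq_iff imat_def ivec_def)
  from cramer_field[OF d, of "ivec g"]
  have "det ?M *s ivec g = (\<Sum>i\<in>UNIV. det (imat (\<chi> r. if r = i then g else M$r) :: rat^'n^'n) *s ?M$i)"
    by (simp add: rep)
  then have "(ivec (det M *s g) :: rat^'n) = ivec (\<Sum>i\<in>UNIV. det (\<chi> r. if r = i then g else M$r) *s M$i)"
    by (simp add: ivec_smult ivec_sum ivec_row det_imat)
  then show ?thesis by (simp only: ivec_inj)
qed



lemma norm_add_diff_eq:
  fixes a b :: complex
  assumes "norm (a + b) = norm a + norm b" "norm (a - b) = norm a + norm b"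
  shows "a = 0 \<or> b = 0"
proof -
  have "norm (a+b)^2 + norm (a-b)^2 = 2 * (norm a ^2 + norm b^2)"
    by (simp add: dot_square_norm[symmetric] inner_add_left inner_add_right inner_diff_left inner_diff_right inner_commute algebra_simps)
  then have "norm a * norm b = 0" using assms by (simp add: algebra_simps power2_eq_square)
  then show ?thesis by simp
qed

definition delta :: "('k::finite \<Rightarrow> nat) \<Rightarrow> ('k \<Rightarrow> nat) \<Rightarrow> complex" where
  "delta \<alpha> = (\<lambda>\<beta>. if \<beta> = \<alpha> then 1 else 0)"

definition unitm :: "'k \<Rightarrow> ('k \<Rightarrow> nat)" where
  "unitm i = (\<lambda>j. if j = i then 1 else 0)"

lemma has_sum_single: "((\<lambda>\<beta>. if \<beta> = \<alpha> then f \<beta> else 0) has_sum f \<alpha>) UNIV"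
  by (rule has_sum_finite_neutralI[where B="{\<alpha>}"]) auto

lemma delta_Aplus: "delta \<alpha> \<in> Aplus"
proof -
  have "((\<lambda>\<beta>. norm (delta \<alpha> \<beta>)) has_sum 1) UNIV"
    using has_sum_single[of \<alpha> "\<lambda>_. 1::real"] by (simp add: delta_def if_distrib cong: if_cong)
  then show ?thesis unfolding Aplus_def by (auto dest: has_sum_imp_summable)
qed

lemma delta_norm: "Aplus_norm (delta \<alpha>) = 1"
proof -
  have "((\<lambda>\<beta>. norm (delta \<alpha> \<beta>)) has_sum 1) UNIV"
    using has_sum_single[of \<alpha> "\<lambda>_. 1::real"] by (simp add: delta_def if_distrib cong: if_cong)
  then show ?thesis unfolding Aplus_norm_def by (simp add: infsumI)
qed

lemma delta_eval: "Aplus_eval (delta \<alpha>) z = monom z \<alpha>"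
proof -
  have e: "(\<lambda>\<beta>. delta \<alpha> \<beta> * monom z \<beta>) = (\<lambda>\<beta>. if \<beta> = \<alpha> then monom z \<beta> else 0)"
    by (auto simp: delta_def)
  have "((\<lambda>\<beta>. delta \<alpha> \<beta> * monom z \<beta>) has_sum monom z \<alpha>) UNIV"
    unfolding e by (rule has_sum_single)
  then show ?thesis unfolding Aplus_eval_def by (simp add: infsumI)
qed

lemma monom_unitm: "monom z (unitm i) = z$i"
proof -
  have "monom z (unitm i) = (\<Prod>j\<in>UNIV. if j = i then z$j else 1)"
    unfolding monom_def unitm_def by (rule prod.cong) auto
  also have "\<dots> = z$i" by (simp add: prod.delta)
  finally show ?thesis .
qed

lemma nat_minus_nat: "int (nat x) - int (nat (-x)) = x" by simp

lemma sum_option_UNIV: "sum f (UNIV :: 'a::finite option set) = f None + (\<Sum>r\<in>UNIV. f (Some r))"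
proof -
  have "(UNIV :: 'a option set) = insert None (Some ` UNIV)" by (auto simp: UNIV_option_conv)
  then have "sum f (UNIV :: 'a option set) = sum f (insert None (Some ` UNIV))" by simp
  also have "\<dots> = f None + sum f (Some ` UNIV)" by (subst sum.insert) auto
  also have "sum f (Some ` UNIV) = (\<Sum>r\<in>UNIV. f (Some r))" by (subst sum.reindex) auto
  finally show ?thesis .
qed



lemma Aplus_has_norm: "c \<in> Aplus \<Longrightarrow> ((\<lambda>y. norm (c y)) has_sum Aplus_norm c) UNIV"
  unfolding Aplus_def Aplus_norm_def by (simp add: has_sum_infsum)

context
  fixes \<phi> :: "complex^'k::finite \<Rightarrow> complex^'k"
  assumes maps: "\<forall>z\<in>polydisc. \<phi> z \<in> cpolydisc"
    and bnd: "\<forall>c\<in>Aplus. \<exists>d\<in>Aplus. is_comp \<phi> c d"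
    and iso: "\<forall>c\<in>Aplus. \<forall>d\<in>Aplus. is_comp \<phi> c d \<longrightarrow> Aplus_norm d = Aplus_norm c"
begin

definition "Tc c = (SOME d. d \<in> Aplus \<and> is_comp \<phi> c d)"

lemma Tc: "c \<in> Aplus \<Longrightarrow> Tc c \<in> Aplus \<and> is_comp \<phi> c (Tc c)"
  unfolding Tc_def using bnd by (metis (no_types, lifting) someI_ex)

lemma Tc_unique:
  assumes "c \<in> Aplus" "d \<in> Aplus" "is_comp \<phi> c d" shows "d = Tc c"
  using Tc[OF assms(1)] assms by (intro Aplus_unique) (auto simp: is_comp_def)

definition "gg \<alpha> = Tc (delta \<alpha>)"

lemma gg_Aplus: "gg \<alpha> \<in> Aplus"
  unfolding gg_def using Tc[OF delta_Aplus] by blast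

lemma gg_eval: "z \<in> polydisc \<Longrightarrow> Aplus_eval (gg \<alpha>) z = monom (\<phi> z) \<alpha>"
  unfolding gg_def using Tc[OF delta_Aplus] by (auto simp: is_comp_def delta_eval)

lemma gg_norm: "Aplus_norm (gg \<alpha>) = 1"
  using iso Tc[OF delta_Aplus] delta_Aplus delta_norm unfolding gg_def by metis

lemma gg_eq: "d \<in> Aplus \<Longrightarrow> (\<forall>z\<in>polydisc. Aplus_eval d z = monom (\<phi> z) \<alpha>) \<Longrightarrow> d = gg \<alpha>"
  unfolding gg_def by (rule Tc_unique[OF delta_Aplus]) (auto simp: is_comp_def delta_eval)

lemma gg_zero: "gg (\<lambda>_. 0) = delta (\<lambda>_. 0)"
  by (rule gg_eq[symmetric]) (auto simp: delta_Aplus delta_eval)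

lemma gg_madd: "gg (madd \<alpha> \<beta>) = conv (gg \<alpha>) (gg \<beta>)"
proof (rule gg_eq[symmetric])
  show "conv (gg \<alpha>) (gg \<beta>) \<in> Aplus" by (rule conv_Aplus[OF gg_Aplus gg_Aplus])
  show "\<forall>z\<in>polydisc. Aplus_eval (conv (gg \<alpha>) (gg \<beta>)) z = monom (\<phi> z) (madd \<alpha> \<beta>)"
    using conv_eval[OF gg_Aplus gg_Aplus] polydisc_sub gg_eval by (auto simp: monom_madd)
qed

lemma gg_supp_add:
  assumes "gg \<alpha> v \<noteq> 0" "gg \<beta> w \<noteq> 0" shows "gg (madd \<alpha> \<beta>) (madd v w) \<noteq> 0"
proof -
  have "Aplus_norm (conv (gg \<alpha>) (gg \<beta>)) = Aplus_norm (gg \<alpha>) * Aplus_norm (gg \<beta>)"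
    by (simp only: gg_madd[symmetric] gg_norm)
  from conv_nocancel[OF gg_Aplus gg_Aplus this assms] show ?thesis by (simp add: gg_madd)
qed

lemma gg_abs_eq:
  assumes ne: "\<alpha> \<noteq> \<beta>" and l: "norm l = 1"
  shows "norm (gg \<alpha> x + l * gg \<beta> x) = norm (gg \<alpha> x) + norm (gg \<beta> x)"
proof -
  let ?c = "\<lambda>y. delta \<alpha> y + l * delta \<beta> y"
  let ?d = "\<lambda>y. gg \<alpha> y + l * gg \<beta> y"
  have cA: "?c \<in> Aplus" by (intro Aplus_add Aplus_scale delta_Aplus)
  have dA: "?d \<in> Aplus" by (intro Aplus_add Aplus_scale gg_Aplus)
  have "is_comp \<phi> ?c ?d"
    unfolding is_comp_def
  proof
    fix z :: "complex^'k" assume z: "z \<in> polydisc"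
    have "Aplus_eval ?d z = Aplus_eval (gg \<alpha>) z + Aplus_eval (\<lambda>y. l * gg \<beta> y) z"
      by (rule eval_add) (use z polydisc_sub in \<open>auto intro: gg_Aplus Aplus_scale\<close>)
    also have "\<dots> = monom (\<phi> z) \<alpha> + l * monom (\<phi> z) \<beta>" using z by (simp add: eval_scale gg_eval)
    also have "\<dots> = Aplus_eval (delta \<alpha>) (\<phi> z) + Aplus_eval (\<lambda>y. l * delta \<beta> y) (\<phi> z)"
      by (simp add: eval_scale delta_eval)
    also have "\<dots> = Aplus_eval ?c (\<phi> z)"
      by (rule eval_add[symmetric]) (use z maps in \<open>auto intro: delta_Aplus Aplus_scale\<close>)
    finally show "Aplus_eval ?d z = Aplus_eval ?c (\<phi> z)" .
  qed
  then have nd: "Aplus_norm ?d = Aplus_norm ?c" using iso cA dA by blast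
  have "((\<lambda>y. norm (?c y)) has_sum 2) UNIV"
  proof (rule has_sum_finite_neutralI[where B="{\<alpha>,\<beta>}"])
    show "2 = (\<Sum>y\<in>{\<alpha>,\<beta>}. norm (?c y))" using ne l by (simp add: delta_def)
  qed (auto simp: delta_def)
  then have nc: "Aplus_norm ?c = 2" unfolding Aplus_norm_def by (simp add: infsumI)
  have hd: "((\<lambda>y. norm (?d y)) has_sum 2) UNIV"
    using Aplus_has_norm[OF dA] nd nc by simp
  have ha: "((\<lambda>y. norm (gg \<alpha> y)) has_sum 1) UNIV"
    using Aplus_has_norm[OF gg_Aplus] gg_norm by simp
  have hb: "((\<lambda>y. norm (gg \<beta> y)) has_sum 1) UNIV"
    using Aplus_has_norm[OF gg_Aplus] gg_norm by simp
  have hs: "((\<lambda>y. norm (gg \<alpha> y) + norm (gg \<beta> y) + - norm (?d y)) has_sum (1 + 1 + - 2)) UNIV"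
    by (intro has_sum_add has_sum_uminusI ha hb hd)
  have le: "norm (?d y) \<le> norm (gg \<alpha> y) + norm (gg \<beta> y)" for y
    using norm_triangle_ineq[of "gg \<alpha> y" "l * gg \<beta> y"] l by (simp add: norm_mult)
  have "norm (gg \<alpha> x) + norm (gg \<beta> x) + - norm (?d x) = 0"
    by (rule nonneg_infsum_le_0D[where f="\<lambda>y. norm (gg \<alpha> y) + norm (gg \<beta> y) + - norm (?d y)" and A=UNIV])
       (use hs le has_sum_imp_summable[OF hs] in \<open>auto simp: infsumI\<close>)
  then show ?thesis by simp
qed

lemma gg_disj:
  assumes "\<alpha> \<noteq> \<beta>" shows "gg \<alpha> x = 0 \<or> gg \<beta> x = 0"
proof -
  have "norm (gg \<alpha> x + 1 * gg \<beta> x) = norm (gg \<alpha> x) + norm (gg \<beta> x)"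
    by (rule gg_abs_eq[OF assms]) simp
  moreover have "norm (gg \<alpha> x + (-1) * gg \<beta> x) = norm (gg \<alpha> x) + norm (gg \<beta> x)"
    by (rule gg_abs_eq[OF assms]) simp
  ultimately show ?thesis using norm_add_diff_eq[of "gg \<alpha> x" "gg \<beta> x"] by simp
qed

lemma gg_mult:
  assumes "gg (unitm i) s \<noteq> 0"
  shows "gg (\<lambda>j. m * unitm i j) (\<lambda>j. m * s j) \<noteq> 0"
proof (induction m)
  case 0
  then show ?case using gg_zero by (simp add: delta_def)
next
  case (Suc m)
  have "gg (madd (\<lambda>j. m * unitm i j) (unitm i)) (madd (\<lambda>j. m * s j) s) \<noteq> 0"
    by (rule gg_supp_add[OF Suc assms])
  moreover have "madd (\<lambda>j. m * unitm i j) (unitm i) = (\<lambda>j. Suc m * unitm i j)"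
    by (simp add: madd_def fun_eq_iff)
  moreover have "madd (\<lambda>j. m * s j) s = (\<lambda>j. Suc m * s j)"
    by (simp add: madd_def fun_eq_iff)
  ultimately show ?case by simp
qed

lemma gg_combo:
  assumes "finite T" "\<forall>t\<in>T. gg (unitm (idx t)) (s t) \<noteq> 0"
  shows "gg (\<lambda>j. \<Sum>t\<in>T. m t * unitm (idx t) j) (\<lambda>j. \<Sum>t\<in>T. m t * s t j) \<noteq> 0"
  using assms
proof (induction T rule: finite_induct)
  case empty
  then show ?case using gg_zero by (simp add: delta_def)
next
  case (insert t F)
  have "gg (madd (\<lambda>j. m t * unitm (idx t) j) (\<lambda>j. \<Sum>t\<in>F. m t * unitm (idx t) j))
           (madd (\<lambda>j. m t * s t j) (\<lambda>j. \<Sum>t\<in>F. m t * s t j)) \<noteq> 0"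
    by (rule gg_supp_add[OF gg_mult]) (use insert in auto)
  moreover have "madd (\<lambda>j. m t * unitm (idx t) j) (\<lambda>j. \<Sum>t\<in>F. m t * unitm (idx t) j)
      = (\<lambda>j. \<Sum>t\<in>insert t F. m t * unitm (idx t) j)"
    using insert by (simp add: madd_def fun_eq_iff)
  moreover have "madd (\<lambda>j. m t * s t j) (\<lambda>j. \<Sum>t\<in>F. m t * s t j) = (\<lambda>j. \<Sum>t\<in>insert t F. m t * s t j)"
    using insert by (simp add: madd_def fun_eq_iff)
  ultimately show ?case by simp
qed

lemma rel_collide:
  assumes fin: "finite T" and sel: "\<forall>t\<in>T. gg (unitm (idx t)) (s t) \<noteq> 0"
    and rel: "\<forall>j. (\<Sum>t\<in>T. w t * int (s t j)) = 0"
  shows "(\<Sum>t\<in>T. if idx t = j then w t else 0) = 0"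
proof -
  define \<alpha> where "\<alpha> = (\<lambda>j. \<Sum>t\<in>T. nat (w t) * unitm (idx t) j)"
  define \<alpha>' where "\<alpha>' = (\<lambda>j. \<Sum>t\<in>T. nat (- w t) * unitm (idx t) j)"
  define P where "P = (\<lambda>j. \<Sum>t\<in>T. nat (w t) * s t j)"
  define P' where "P' = (\<lambda>j. \<Sum>t\<in>T. nat (- w t) * s t j)"
  have "P = P'"
  proof
    fix j
    have "int (P j) - int (P' j) = (\<Sum>t\<in>T. (int (nat (w t)) - int (nat (- w t))) * int (s t j))"
      by (simp add: P_def P'_def of_nat_sum sum_subtractf left_diff_distrib)
    also have "\<dots> = (\<Sum>t\<in>T. w t * int (s t j))" by (simp only: nat_minus_nat)
    also have "\<dots> = 0" using rel by simp
    finally show "P j = P' j" by simp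
  qed
  have g1: "gg \<alpha> P \<noteq> 0" unfolding \<alpha>_def P_def by (rule gg_combo[OF fin sel])
  have g2: "gg \<alpha>' P \<noteq> 0" unfolding \<alpha>'_def \<open>P = P'\<close> P'_def by (rule gg_combo[OF fin sel])
  have "\<alpha> = \<alpha>'" using gg_disj g1 g2 by blast
  then have "int (\<alpha> j) - int (\<alpha>' j) = 0" by simp
  moreover have "int (\<alpha> j) - int (\<alpha>' j) = (\<Sum>t\<in>T. if idx t = j then w t else 0)"
  proof -
    have "int (\<alpha> j) - int (\<alpha>' j) = (\<Sum>t\<in>T. (int (nat (w t)) - int (nat (- w t))) * int (unitm (idx t) j))"
      by (simp add: \<alpha>_def \<alpha>'_def of_nat_sum sum_subtractf left_diff_distrib)
    also have "\<dots> = (\<Sum>t\<in>T. w t * int (unitm (idx t) j))" by (simp only: nat_minus_nat)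
    also have "\<dots> = (\<Sum>t\<in>T. if idx t = j then w t else 0)"
      by (rule sum.cong) (auto simp: unitm_def)
    finally show ?thesis .
  qed
  ultimately show ?thesis by simp
qed


lemma gg_nonzero: "\<exists>\<gamma>. gg \<alpha> \<gamma> \<noteq> 0"
proof (rule ccontr)
  assume "\<not> (\<exists>\<gamma>. gg \<alpha> \<gamma> \<noteq> 0)"
  then have "gg \<alpha> = (\<lambda>_. 0)" by auto
  then have "Aplus_norm (gg \<alpha>) = 0" by (simp add: Aplus_norm_def)
  then show False using gg_norm by simp
qed

definition "sel0 i = (SOME \<gamma>. gg (unitm i) \<gamma> \<noteq> 0)"

lemma sel0: "gg (unitm i) (sel0 i) \<noteq> 0"
  unfolding sel0_def using gg_nonzero by (metis (mono_tags, lifting) someI_ex)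

definition smat :: "('k \<Rightarrow> 'k \<Rightarrow> nat) \<Rightarrow> int^'k^'k" where
  "smat \<sigma> = (\<chi> i j. int (\<sigma> i j))"

lemma indep:
  assumes sel: "\<forall>i. gg (unitm i) (\<sigma> i) \<noteq> 0" shows "det (smat \<sigma>) \<noteq> 0"
proof
  assume "det (smat \<sigma>) = 0"
  then obtain v where v: "v \<noteq> 0" "transpose (smat \<sigma>) *v v = 0" using kernel_int by blast
  have rel: "\<forall>j. (\<Sum>i\<in>UNIV. v$i * int (\<sigma> i j)) = 0"
    using v(2) by (simp add: vec_eq_iff matrix_vector_mult_def transpose_def smat_def mult.commute)
  have "v$j = 0" for j
  proof -
    have "(\<Sum>i\<in>UNIV. if id i = j then v$i else 0) = 0"
      by (rule rel_collide[where s=\<sigma>]) (use sel rel in auto)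
    then show ?thesis by simp
  qed
  then show False using v(1) by (simp add: vec_eq_iff)
qed

lemma single:
  assumes b: "gg (unitm i) \<beta> \<noteq> 0" and g: "gg (unitm i) \<gamma> \<noteq> 0" shows "\<beta> = \<gamma>"
proof -
  define \<sigma> where "\<sigma> = sel0(i := \<beta>)"
  have sel: "\<forall>r. gg (unitm r) (\<sigma> r) \<noteq> 0" using b sel0 by (simp add: \<sigma>_def)
  define M where "M = smat \<sigma>"
  have dM: "det M \<noteq> 0" using indep[OF sel] M_def by simp
  define gv :: "int^'k" where "gv = (\<chi> j. int (\<gamma> j))"
  define c where "c r = det (\<chi> r'. if r' = r then gv else M$r')" for r
  have cr: "det M *s gv = (\<Sum>r\<in>UNIV. c r *s M$r)" unfolding c_def by (rule cramer_int[OF dM])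
  have crj: "det M * int (\<gamma> j) = (\<Sum>r\<in>UNIV. c r * int (\<sigma> r j))" for j
  proof -
    have "(det M *s gv)$j = (\<Sum>r\<in>UNIV. c r *s M$r)$j" using cr by simp
    then show ?thesis by (simp add: sum_component gv_def M_def smat_def)
  qed
  define idx where "idx t = (case t of None \<Rightarrow> i | Some r \<Rightarrow> r)" for t
  define s where "s t = (case t of None \<Rightarrow> \<gamma> | Some r \<Rightarrow> \<sigma> r)" for t
  define w where "w t = (case t of None \<Rightarrow> det M | Some r \<Rightarrow> - c r)" for t
  have sel': "\<forall>t\<in>UNIV. gg (unitm (idx t)) (s t) \<noteq> 0"
    using sel g by (auto simp: idx_def s_def split: option.split)
  have rel': "\<forall>j. (\<Sum>t\<in>UNIV. w t * int (s t j)) = 0"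
    using crj by (simp add: sum_option_UNIV w_def s_def sum_negf)
  have coll: "(\<Sum>t\<in>UNIV. if idx t = j then w t else 0) = 0" for j
    by (rule rel_collide[OF _ sel' rel']) simp
  have cj: "c j = 0" if "j \<noteq> i" for j
    using coll[of j] that by (simp add: sum_option_UNIV idx_def w_def)
  have ci: "c i = det M" using coll[of i] by (simp add: sum_option_UNIV idx_def w_def)
  show "\<beta> = \<gamma>"
  proof
    fix j
    have "(\<Sum>r\<in>UNIV. c r * int (\<sigma> r j)) = (\<Sum>r\<in>UNIV. if r = i then c i * int (\<sigma> i j) else 0)"
      by (rule sum.cong) (auto simp: cj)
    also have "\<dots> = c i * int (\<beta> j)" by (simp add: \<sigma>_def)
    finally have "det M * int (\<gamma> j) = det M * int (\<beta> j)" using crj ci by simp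
    then show "\<beta> j = \<gamma> j" using dM by simp
  qed
qed

lemma iso_imp_monomial:
  "\<exists>(A::int^'k^'k) (\<epsilon>::complex^'k).
     (\<forall>i j. A$i$j \<ge> 0) \<and> det A \<noteq> 0 \<and> (\<forall>i. norm (\<epsilon>$i) = 1) \<and>
     (\<forall>z\<in>polydisc. \<forall>i. \<phi> z $ i = \<epsilon>$i * (\<Prod>j\<in>UNIV. (z$j) ^ nat (A$i$j)))"
proof (intro exI conjI)
  let ?A = "smat sel0" and ?\<epsilon> = "\<chi> i. gg (unitm i) (sel0 i)"
  show "\<forall>i j. ?A$i$j \<ge> 0" by (simp add: smat_def)
  show "det ?A \<noteq> 0" by (rule indep) (simp add: sel0)
  have supp: "gg (unitm i) \<gamma> = 0" if "\<gamma> \<noteq> sel0 i" for i \<gamma>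
    using single[OF sel0[of i], of \<gamma>] that by auto
  show "\<forall>i. norm (?\<epsilon>$i) = 1"
  proof
    fix i
    have "((\<lambda>y. norm (gg (unitm i) y)) has_sum norm (gg (unitm i) (sel0 i))) UNIV"
      by (rule has_sum_finite_neutralI[where B="{sel0 i}"]) (auto simp: supp)
    moreover have "((\<lambda>y. norm (gg (unitm i) y)) has_sum 1) UNIV"
      using Aplus_has_norm[OF gg_Aplus] gg_norm by simp
    ultimately show "norm (?\<epsilon>$i) = 1" using has_sum_unique by fastforce
  qed
  show "\<forall>z\<in>polydisc. \<forall>i. \<phi> z $ i = ?\<epsilon>$i * (\<Prod>j\<in>UNIV. (z$j) ^ nat (?A$i$j))"
  proof (intro ballI allI)
    fix z :: "complex^'k" and i assume z: "z \<in> polydisc"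
    have "\<phi> z $ i = Aplus_eval (gg (unitm i)) z" using gg_eval[OF z] by (simp add: monom_unitm)
    also have "\<dots> = gg (unitm i) (sel0 i) * monom z (sel0 i)"
    proof -
      have "((\<lambda>y. gg (unitm i) y * monom z y) has_sum gg (unitm i) (sel0 i) * monom z (sel0 i)) UNIV"
        by (rule has_sum_finite_neutralI[where B="{sel0 i}"]) (auto simp: supp)
      then show ?thesis unfolding Aplus_eval_def by (simp add: infsumI)
    qed
    also have "\<dots> = ?\<epsilon>$i * (\<Prod>j\<in>UNIV. (z$j) ^ nat (?A$i$j))"
      by (simp add: monom_def smat_def)
    finally show "\<phi> z $ i = ?\<epsilon>$i * (\<Prod>j\<in>UNIV. (z$j) ^ nat (?A$i$j))" .
  qed
qed

end



lemma int_kernel_trivial: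
  fixes A :: "int^'n::finite^'n"
  assumes "det A \<noteq> 0" "transpose A *v v = 0"
  shows "v = 0"
proof -
  have "det (transpose (imat A :: rat^'n^'n)) \<noteq> 0" using assms(1) by (simp add: det_imat)
  then have "invertible (transpose (imat A :: rat^'n^'n))" by (simp add: invertible_det_nz)
  then have inj: "inj ((*v) (transpose (imat A :: rat^'n^'n)))" by (simp add: invertible_eq_bij bij_def)
  have "transpose (imat A :: rat^'n^'n) *v ivec v = ivec (transpose A *v v)"
    by (simp add: vec_eq_iff matrix_vector_mult_def transpose_def imat_def ivec_def of_int_sum)
  also have "\<dots> = transpose (imat A :: rat^'n^'n) *v 0" using assms(2) by (simp add: ivec_def vec_eq_iff)
  finally have eq: "transpose (imat A :: rat^'n^'n) *v ivec v = transpose (imat A :: rat^'n^'n) *v 0" .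
  have "(ivec v :: rat^'n) = 0" by (rule injD[OF inj eq])
  then have "(ivec v :: rat^'n) = ivec 0" by (simp add: ivec_def vec_eq_iff)
  then show ?thesis by (simp only: ivec_inj)
qed

lemma has_sum_range_reindex:
  assumes inj: "inj E" and z: "\<And>x. x \<notin> range E \<Longrightarrow> f x = 0"
  shows "(f has_sum s) UNIV \<longleftrightarrow> ((f \<circ> E) has_sum s) UNIV"
proof -
  have "(f has_sum s) UNIV \<longleftrightarrow> (f has_sum s) (range E)"
    by (rule has_sum_cong_neutral) (use z in auto)
  also have "\<dots> \<longleftrightarrow> ((f \<circ> E) has_sum s) UNIV" by (rule has_sum_reindex[OF inj])
  finally show ?thesis .
qed

lemma monomial_imp_iso:
  fixes \<phi> :: "complex^'k::finite \<Rightarrow> complex^'k" and A :: "int^'k^'k" and \<epsilon> :: "complex^'k"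
  assumes maps: "\<forall>z\<in>polydisc. \<phi> z \<in> cpolydisc"
    and nonneg: "\<forall>i j. A$i$j \<ge> 0" and dA: "det A \<noteq> 0" and eps: "\<forall>i. norm (\<epsilon>$i) = 1"
    and form: "\<forall>z\<in>polydisc. \<forall>i. \<phi> z $ i = \<epsilon>$i * (\<Prod>j\<in>UNIV. (z$j) ^ nat (A$i$j))"
    and cA: "c \<in> Aplus" and dAp: "d \<in> Aplus" and comp: "is_comp \<phi> c d"
  shows "Aplus_norm d = Aplus_norm c"
proof -
  define a where "a i j = nat (A$i$j)" for i j
  define E where "E \<alpha> = (\<lambda>j. \<Sum>i\<in>UNIV. \<alpha> i * a i j)" for \<alpha> :: "'k \<Rightarrow> nat"
  define epw where "epw \<alpha> = (\<Prod>i\<in>UNIV. (\<epsilon>$i) ^ (\<alpha> i))" for \<alpha> :: "'k \<Rightarrow> nat"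
  have Aa: "A$i$j = int (a i j)" for i j using nonneg by (simp add: a_def)
  have injE: "inj E"
  proof (rule injI)
    fix \<alpha> \<beta> assume eq: "E \<alpha> = E \<beta>"
    define v :: "int^'k" where "v = (\<chi> i. int (\<alpha> i) - int (\<beta> i))"
    have "transpose A *v v = 0"
    proof -
      have "(transpose A *v v)$j = int (E \<alpha> j) - int (E \<beta> j)" for j
        by (simp add: matrix_vector_mult_def transpose_def v_def E_def Aa of_nat_sum
            sum_subtractf algebra_simps)
      then show ?thesis using eq by (simp add: vec_eq_iff)
    qed
    then have "v = 0" by (rule int_kernel_trivial[OF dA])
    then show "\<alpha> = \<beta>" by (simp add: v_def vec_eq_iff fun_eq_iff)
  qed
  have nepw: "norm (epw \<alpha>) = 1" for \<alpha>
    by (simp add: epw_def prod_norm[symmetric] norm_power eps)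
  define d' where "d' \<beta> = (if \<beta> \<in> range E then c (inv E \<beta>) * epw (inv E \<beta>) else 0)" for \<beta>
  have d'E: "d' (E \<alpha>) = c \<alpha> * epw \<alpha>" for \<alpha>
    by (simp add: d'_def inv_f_f[OF injE])
  have hn: "((\<lambda>\<beta>. norm (d' \<beta>)) has_sum Aplus_norm c) UNIV"
  proof (subst has_sum_range_reindex[OF injE])
    show "((\<lambda>\<beta>. norm (d' \<beta>)) \<circ> E has_sum Aplus_norm c) UNIV"
      using Aplus_has_norm[OF cA] by (simp add: o_def d'E norm_mult nepw)
  qed (simp add: d'_def)
  have d'A: "d' \<in> Aplus" using hn unfolding Aplus_def by (auto dest: has_sum_imp_summable)
  have nd': "Aplus_norm d' = Aplus_norm c" using hn unfolding Aplus_norm_def by (simp add: infsumI)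
  have mon: "monom (\<phi> z) \<alpha> = epw \<alpha> * monom z (E \<alpha>)" if z: "z \<in> polydisc" for z \<alpha>
  proof -
    have "monom (\<phi> z) \<alpha> = (\<Prod>i\<in>UNIV. (\<epsilon>$i * (\<Prod>j\<in>UNIV. (z$j) ^ a i j)) ^ \<alpha> i)"
      unfolding monom_def using form z by (simp add: a_def)
    also have "\<dots> = epw \<alpha> * (\<Prod>i\<in>UNIV. \<Prod>j\<in>UNIV. (z$j) ^ (\<alpha> i * a i j))"
      by (simp add: epw_def power_mult_distrib prod.distrib prod_power_distrib power_mult[symmetric] mult.commute)
    also have "(\<Prod>i\<in>UNIV. \<Prod>j\<in>UNIV. (z$j) ^ (\<alpha> i * a i j)) = (\<Prod>j\<in>UNIV. \<Prod>i\<in>UNIV. (z$j) ^ (\<alpha> i * a i j))"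
      by (rule prod.swap)
    also have "\<dots> = monom z (E \<alpha>)"
      by (simp add: monom_def E_def power_sum)
    finally show ?thesis .
  qed
  have ev: "Aplus_eval d' z = Aplus_eval c (\<phi> z)" if z: "z \<in> polydisc" for z
  proof -
    have "((\<lambda>\<alpha>. c \<alpha> * monom (\<phi> z) \<alpha>) has_sum Aplus_eval c (\<phi> z)) UNIV"
      unfolding Aplus_eval_def using Aplus_summable_eval'[OF cA] maps z by (simp add: has_sum_infsum)
    then have "((\<lambda>\<beta>. d' \<beta> * monom z \<beta>) has_sum Aplus_eval c (\<phi> z)) UNIV"
    proof (subst has_sum_range_reindex[OF injE])
      show "((\<lambda>\<beta>. d' \<beta> * monom z \<beta>) \<circ> E has_sum Aplus_eval c (\<phi> z)) UNIV"
        using \<open>((\<lambda>\<alpha>. c \<alpha> * monom (\<phi> z) \<alpha>) has_sum Aplus_eval c (\<phi> z)) UNIV\<close>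
        by (simp add: o_def d'E mon[OF z] mult_ac)
    qed (simp add: d'_def)
    then show ?thesis unfolding Aplus_eval_def by (simp add: infsumI)
  qed
  have "d = d'"
    by (rule Aplus_unique[OF dAp d'A]) (use comp ev in \<open>auto simp: is_comp_def\<close>)
  then show ?thesis using nd' by simp
qed


theorem theorem17:
  fixes \<phi> :: "complex^'k::finite \<Rightarrow> complex^'k"
  assumes analytic: "\<forall>i. holo_several (\<lambda>z. \<phi> z $ i) polydisc"
    and maps: "\<forall>z\<in>polydisc. \<phi> z \<in> cpolydisc"
    and bounded_Cphi: "\<forall>c\<in>Aplus. \<exists>d\<in>Aplus. is_comp \<phi> c d"
  shows "(\<forall>c\<in>Aplus. \<forall>d\<in>Aplus. is_comp \<phi> c d \<longrightarrow> Aplus_norm d = Aplus_norm c)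
     \<longleftrightarrow> (\<exists>(A::int^'k^'k) (\<epsilon>::complex^'k).
            (\<forall>i j. A$i$j \<ge> 0) \<and> det A \<noteq> 0 \<and> (\<forall>i. norm (\<epsilon>$i) = 1) \<and>
            (\<forall>z\<in>polydisc. \<forall>i. \<phi> z $ i = \<epsilon>$i * (\<Prod>j\<in>UNIV. (z$j) ^ nat (A$i$j))))"
proof
  assume iso: "\<forall>c\<in>Aplus. \<forall>d\<in>Aplus. is_comp \<phi> c d \<longrightarrow> Aplus_norm d = Aplus_norm c"
  show "\<exists>(A::int^'k^'k) (\<epsilon>::complex^'k).
            (\<forall>i j. A$i$j \<ge> 0) \<and> det A \<noteq> 0 \<and> (\<forall>i. norm (\<epsilon>$i) = 1) \<and>
            (\<forall>z\<in>polydisc. \<forall>i. \<phi> z $ i = \<epsilon>$i * (\<Prod>j\<in>UNIV. (z$j) ^ nat (A$i$j)))"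
    by (rule iso_imp_monomial[OF maps bounded_Cphi iso])
next
  assume "\<exists>(A::int^'k^'k) (\<epsilon>::complex^'k).
            (\<forall>i j. A$i$j \<ge> 0) \<and> det A \<noteq> 0 \<and> (\<forall>i. norm (\<epsilon>$i) = 1) \<and>
            (\<forall>z\<in>polydisc. \<forall>i. \<phi> z $ i = \<epsilon>$i * (\<Prod>j\<in>UNIV. (z$j) ^ nat (A$i$j)))"
  then obtain A :: "int^'k^'k" and \<epsilon> :: "complex^'k" where
    H: "\<forall>i j. A$i$j \<ge> 0" "det A \<noteq> 0" "\<forall>i. norm (\<epsilon>$i) = 1"
       "\<forall>z\<in>polydisc. \<forall>i. \<phi> z $ i = \<epsilon>$i * (\<Prod>j\<in>UNIV. (z$j) ^ nat (A$i$j))"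
    by blast
  show "\<forall>c\<in>Aplus. \<forall>d\<in>Aplus. is_comp \<phi> c d \<longrightarrow> Aplus_norm d = Aplus_norm c"
    using monomial_imp_iso[OF maps H] by blast
qed

end
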